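(* For every $t\ge0$, $(r^+,r^-)\in\mathcal S^2$, $D\ge1$, $\mathrm{sgn}\in\{+,-\}^D$ and every $\boldsymbol\tau'=(\tau_1',\dots,\tau_D')\in\partial\triangle_T^{(D)}$, the limit $$\lim_{(\tau_1,\dots,\tau_D)\to(\tau_1',\dots,\tau_D'),\ (\tau_1,\dots,\tau_D)\in\triangle_T^{(D)}}A^{D,\mathrm{sgn}}_{(r^+,r^-)}(t,[\tau_1,\dots,\tau_D])$$ exists; consequently $A^{D,\mathrm{sgn}}_{(r^+,r^-)}(t,[\tau_1',\dots,\tau_D'])$ can be defined as this limit.
   Context: Let $\mathcal S=\{-1,+1\}$, $\{|-1\rangle,|+1\rangle\}$ an orthonormal basis of $\mathbb C^2$, $H_0$ a Hermitian operator on $\mathbb C^2$, $\rho_s(0)$ a $2\times2$ complex matrix, and $T>0$. Let $\tilde\eta(\tau)=\frac1\pi\int_0^\infty J(\omega)(\coth(\beta\omega/2)\cos\omega\tau-i\sin\omega\tau)d\omega$ with $\beta>0$, $J(\omega)=\frac\pi2\sum_j\frac{c_j^2}{m_j\omega_j}\delta(\omega-\omega_j)$ ($\omega_j>0$); $\tilde\eta$ is continuous and $z^*$ is complex conjugation. For $a\in\mathcal S$ let $\hat a=-a$; for $r=(r^+,r^-)\in\mathcal S^2$ let $E(r)=\langle r^+|H_0|r^+\rangle-\langle r^-|H_0|r^-\rangle$. For $L>0$, $D\ge0$: $\triangle_L^{(D)}=\{(\tau_1,\dots,\tau_D):\tau_k>0,\sum\tau_k<L\}$ (a single point if $D=0$,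 integration over it meaning evaluation). Path segments: given $r_0\in\mathcal S^2$, $D\ge0$, $\mathrm{sgn}\in\{+,-\}^D$, define $r_1,\dots,r_D$ by: $r_j$ is $r_{j-1}$ with its $+$ component flipped ($a\mapsto\hat a$) if $\mathrm{sgn}_j=+$, or its $-$ component flipped if $\mathrm{sgn}_j=-$. For $\boldsymbol\tau\in\triangle_L^{(D)}$ the path segment on $[0,L)$ equals $r_d$ on $[\sum_{k\le d}\tau_k,\sum_{k\le d+1}\tau_k)$ ($0\le d<D$) and $r_D$ on $[\sum_{k\le D}\tau_k,L)$. Its flip factors are $V_j=-i\langle r_j^+|H_0|r_{j-1}^+\rangle$ if $\mathrm{sgn}_j=+$ and $V_j=i\langle r_{j-1}^-|H_0|r_j^-\rangle$ if $\mathrm{sgn}_j=-$; its piece lengths are $\ell_0=\tau_1$, $\ell_j=\tau_{j+1}$ ($1\le j<D$), $\ell_D=L-\sum\tau_k$ ($\ell_0=L$ if $D=0$). For $t\ge0$ let $h=(h^+,h^-)$ be the path segment on $[0,T)$ with data $(r_0,D,\mathrm{sgn},\boldsymbol\tau)$ and $Y(h)=\prod_{j=0}^De^{-iE(r_j)\ell_j}\prod_{j=1}^DV_j$. For $\tilde D\ge0$, $\tilde r_0\in\mathcal S^2$, $\widetilde{\mathrm{sgn}}\in\{+,-\}^{\tilde D}$, $\tilde{\boldsymbol\tau}\in\triangle_t^{(\tilde D)}$, let $g=(g^+,g^-)$ be the path segment on $[0,t)$ with these data (states $\tilde r_j$, flip factors $\tilde V_j$, lengths $\tilde\ell_j$)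 and $X(g)=\langle\tilde r_0^+|\rho_s(0)|\tilde r_0^-\rangle\prod_{j=0}^{\tilde D}e^{-iE(\tilde r_j)\tilde\ell_j}\prod_{j=1}^{\tilde D}\tilde V_j$. Let $Z(g,h)=-\int_0^tdx_1\int_{\max(0,x_1-T)}^{x_1}dx_2\,(g^+(x_1)-g^-(x_1))(g^+(x_2)\tilde\eta(x_1-x_2)-g^-(x_2)\tilde\eta^*(x_1-x_2))-\int_t^{t+T}dx_1\int_{\max(0,x_1-T)}^{t}dx_2\,(h^+(x_1-t)-h^-(x_1-t))(g^+(x_2)\tilde\eta(x_1-x_2)-g^-(x_2)\tilde\eta^*(x_1-x_2))-\int_0^Tdx_1\int_0^{x_1}dx_2\,(h^+(x_1)-h^-(x_1))(h^+(x_2)\tilde\eta(x_1-x_2)-h^-(x_2)\tilde\eta^*(x_1-x_2))$. Then for $\boldsymbol\tau\in\triangle_T^{(D)}$: $A^{D,\mathrm{sgn}}_{r_0}(t,[\tau_1,\dots,\tau_D]):=\sum_{\tilde D=0}^\infty\sum_{\tilde r_0\in\mathcal S^2}\sum_{\widetilde{\mathrm{sgn}}\in\{+,-\}^{\tilde D}}\int_{\triangle_t^{(\tilde D)}}X(g)\,\mathbf 1[\tilde r_{\tilde D}=r_0]\,Y(h)\,e^{Z(g,h)}\,d\tilde{\boldsymbol\tau}$. *)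

theory Defs
  imports "HOL-Analysis.Analysis"
begin

text \<open>Spin values: the set S = {-1,+1}, represented inside int.
  Matrix elements of operators on C^2 in the basis |-1>,|+1> are given as
  functions int => int => complex (only arguments in S matter).\<close>

definition spins :: "int set" where
  "spins = {-1, 1}"

definition hermitian2 :: "(int \<Rightarrow> int \<Rightarrow> complex) \<Rightarrow> bool" where
  "hermitian2 H \<longleftrightarrow> (\<forall>a\<in>spins. \<forall>b\<in>spins. H a b = cnj (H b a))"

text \<open>The bath correlation function eta-tilde for the discrete spectral density
  J(w) = pi/2 * sum_j c_j^2/(m_j w_j) delta(w - w_j); (1/pi) int J(w)(...) dw
  unfolds to (1/2) sum_j c_j^2/(m_j w_j) (coth(beta w_j/2) cos(w_j tau) - i sin(w_j tau)).\<close>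

definition eta_term :: "real \<Rightarrow> ('j \<Rightarrow> real) \<Rightarrow> ('j \<Rightarrow> real) \<Rightarrow> ('j \<Rightarrow> real) \<Rightarrow> real \<Rightarrow> 'j \<Rightarrow> complex" where
  "eta_term \<beta> c m \<omega> \<tau> j =
     complex_of_real (c j ^ 2 / (m j * \<omega> j)) *
     (complex_of_real (cosh (\<beta> * \<omega> j / 2) / sinh (\<beta> * \<omega> j / 2) * cos (\<omega> j * \<tau>))
      - \<i> * complex_of_real (sin (\<omega> j * \<tau>)))"

definition eta_tilde :: "real \<Rightarrow> ('j \<Rightarrow> real) \<Rightarrow> ('j \<Rightarrow> real) \<Rightarrow> ('j \<Rightarrow> real) \<Rightarrow> real \<Rightarrow> complex" where
  "eta_tilde \<beta> c m \<omega> \<tau> = (1/2) * infsum (eta_term \<beta> c m \<omega> \<tau>) UNIV"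

text \<open>Flipping: True means sgn = +, flip the + component; False means sgn = -.\<close>

definition flip :: "bool \<Rightarrow> int \<times> int \<Rightarrow> int \<times> int" where
  "flip s r = (if s then (- fst r, snd r) else (fst r, - snd r))"

text \<open>State r_j (j = 0..D) of a path segment with initial state r0 and signs sg
  (list of length D; entry j-1 of the list is sgn_j).\<close>

definition pstate :: "int \<times> int \<Rightarrow> bool list \<Rightarrow> nat \<Rightarrow> int \<times> int" where
  "pstate r0 sg j = fold flip (take j sg) r0"

text \<open>Times are 0-based: tau k (k < D) is tau_{k+1} of the paper.
  The open simplex triangle_L^(D); for D = 0 it is the whole space (a single point
  after restricting to the relevant coordinates).\<close>

definition tsimplex :: "nat \<Rightarrow> real \<Rightarrow> (nat \<Rightarrow> real) set" where
  "tsimplex D L = {\<tau>. (\<forall>k<D. 0 < \<tau> k) \<and> (D = 0 \<or> (\<Sum>k<D. \<tau> k) < L)}"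

text \<open>The simplex as a subset of R^D, embedded into nat => real (coordinates >= D are 0).\<close>

definition tsimplexR :: "nat \<Rightarrow> real \<Rightarrow> (nat \<Rightarrow> real) set" where
  "tsimplexR D L = tsimplex D L \<inter> {\<tau>. \<forall>k\<ge>D. \<tau> k = 0}"

definition pathseg :: "int \<times> int \<Rightarrow> bool list \<Rightarrow> (nat \<Rightarrow> real) \<Rightarrow> real \<Rightarrow> int \<times> int" where
  "pathseg r0 sg \<tau> x = pstate r0 sg (card {k. k < length sg \<and> (\<Sum>i\<le>k. \<tau> i) \<le> x})"

definition energy :: "(int \<Rightarrow> int \<Rightarrow> complex) \<Rightarrow> int \<times> int \<Rightarrow> complex" where
  "energy H r = H (fst r) (fst r) - H (snd r) (snd r)"

definition flipfac :: "(int \<Rightarrow> int \<Rightarrow> complex) \<Rightarrow> int \<times> int \<Rightarrow> bool list \<Rightarrow> nat \<Rightarrow> complex" where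
  "flipfac H r0 sg j =
    (if sg ! (j - 1)
     then - \<i> * H (fst (pstate r0 sg j)) (fst (pstate r0 sg (j - 1)))
     else \<i> * H (snd (pstate r0 sg (j - 1))) (snd (pstate r0 sg j)))"

definition piecelen :: "bool list \<Rightarrow> (nat \<Rightarrow> real) \<Rightarrow> real \<Rightarrow> nat \<Rightarrow> real" where
  "piecelen sg \<tau> L j = (if j < length sg then \<tau> j else L - (\<Sum>k<length sg. \<tau> k))"

definition segweight :: "(int \<Rightarrow> int \<Rightarrow> complex) \<Rightarrow> int \<times> int \<Rightarrow> bool list \<Rightarrow> (nat \<Rightarrow> real) \<Rightarrow> real \<Rightarrow> complex" where
  "segweight H r0 sg \<tau> L =
     (\<Prod>j\<in>{0..length sg}. exp (- \<i> * energy H (pstate r0 sg j) * complex_of_real (piecelen sg \<tau> L j)))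
     * (\<Prod>j\<in>{1..length sg}. flipfac H r0 sg j)"

definition Yw :: "(int \<Rightarrow> int \<Rightarrow> complex) \<Rightarrow> int \<times> int \<Rightarrow> bool list \<Rightarrow> (nat \<Rightarrow> real) \<Rightarrow> real \<Rightarrow> complex" where
  "Yw H r0 sg \<tau> T = segweight H r0 sg \<tau> T"

definition Xw :: "(int \<Rightarrow> int \<Rightarrow> complex) \<Rightarrow> (int \<Rightarrow> int \<Rightarrow> complex) \<Rightarrow> int \<times> int \<Rightarrow> bool list \<Rightarrow> (nat \<Rightarrow> real) \<Rightarrow> real \<Rightarrow> complex" where
  "Xw H \<rho> r0 sg \<tau> t = \<rho> (fst r0) (snd r0) * segweight H r0 sg \<tau> t"

definition pp :: "int \<times> int \<Rightarrow> complex" where "pp r = of_int (fst r)"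
definition pm :: "int \<times> int \<Rightarrow> complex" where "pm r = of_int (snd r)"

definition Zphase :: "(real \<Rightarrow> complex) \<Rightarrow> real \<Rightarrow> real \<Rightarrow> (real \<Rightarrow> int \<times> int) \<Rightarrow> (real \<Rightarrow> int \<times> int) \<Rightarrow> complex" where
  "Zphase \<eta> T t g h =
   - (LINT x1:{0..t}|lborel. LINT x2:{max 0 (x1 - T)..x1}|lborel.
        (pp (g x1) - pm (g x1)) * (pp (g x2) * \<eta> (x1 - x2) - pm (g x2) * cnj (\<eta> (x1 - x2))))
   - (LINT x1:{t..t+T}|lborel. LINT x2:{max 0 (x1 - T)..t}|lborel.
        (pp (h (x1 - t)) - pm (h (x1 - t))) * (pp (g x2) * \<eta> (x1 - x2) - pm (g x2) * cnj (\<eta> (x1 - x2))))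
   - (LINT x1:{0..T}|lborel. LINT x2:{0..x1}|lborel.
        (pp (h x1) - pm (h x1)) * (pp (h x2) * \<eta> (x1 - x2) - pm (h x2) * cnj (\<eta> (x1 - x2))))"

text \<open>The quantity A^{D,sgn}_{r0}(t,[tau_1..tau_D]) (tau given 0-based, length of sg = D).\<close>

definition Aamp :: "(int \<Rightarrow> int \<Rightarrow> complex) \<Rightarrow> (int \<Rightarrow> int \<Rightarrow> complex) \<Rightarrow> (real \<Rightarrow> complex) \<Rightarrow> real
     \<Rightarrow> int \<times> int \<Rightarrow> bool list \<Rightarrow> real \<Rightarrow> (nat \<Rightarrow> real) \<Rightarrow> complex" where
  "Aamp H \<rho> \<eta> T r0 sg t \<tau> =
    (\<Sum>Dt. \<Sum>rt0\<in>spins \<times> spins. \<Sum>sgt\<in>{xs. length xs = Dt}.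
       LINT \<tau>t:tsimplex Dt t|PiM {..<Dt} (\<lambda>_. lborel).
         Xw H \<rho> rt0 sgt \<tau>t t * (if pstate rt0 sgt Dt = r0 then 1 else 0) * Yw H r0 sg \<tau> T
         * exp (Zphase \<eta> T t (pathseg rt0 sgt \<tau>t) (pathseg r0 sg \<tau>)))"

end

theory Submission
  imports Defs
begin


lemma flip_spins: "r \<in> spins \<times> spins \<Longrightarrow> flip s r \<in> spins \<times> spins"
  by (cases r) (auto simp: flip_def spins_def)

lemma fold_flip_spins: "r \<in> spins \<times> spins \<Longrightarrow> fold flip xs r \<in> spins \<times> spins"
  by (induction xs arbitrary: r) (auto simp: flip_spins)

lemma pstate_spins: "r0 \<in> spins \<times> spins \<Longrightarrow> pstate r0 sg j \<in> spins \<times> spins"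
  by (simp add: pstate_def fold_flip_spins)

lemma pathseg_spins: "r0 \<in> spins \<times> spins \<Longrightarrow> pathseg r0 sg \<tau> x \<in> spins \<times> spins"
  by (simp add: pathseg_def pstate_spins)

lemma pp_norm: "r \<in> spins \<times> spins \<Longrightarrow> norm (pp r) = 1"
  by (cases r) (auto simp: pp_def spins_def)

lemma pm_norm: "r \<in> spins \<times> spins \<Longrightarrow> norm (pm r) = 1"
  by (cases r) (auto simp: pm_def spins_def)

lemma energy_real:
  assumes "hermitian2 H" "r \<in> spins \<times> spins"
  shows "Im (energy H r) = 0"
proof -
  obtain a b where r: "r = (a,b)" "a \<in> spins" "b \<in> spins" using assms(2) by (cases r) auto
  have "H a a = cnj (H a a)" "H b b = cnj (H b b)" using assms(1) r(2,3) unfolding hermitian2_def by blast+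
  then have "Im (H a a) = 0" "Im (H b b) = 0" by (metis Reals_cnj_iff complex_is_Real_iff)+
  then show ?thesis by (simp add: energy_def r)
qed

lemma norm_exp_energy:
  assumes "hermitian2 H" "r \<in> spins \<times> spins"
  shows "norm (exp (- \<i> * energy H r * complex_of_real l)) = 1"
proof -
  have "Re (- \<i> * energy H r * complex_of_real l) = 0"
    using energy_real[OF assms] by simp
  then show ?thesis by (simp add: norm_exp_eq_Re)
qed

definition Hm :: "(int \<Rightarrow> int \<Rightarrow> complex) \<Rightarrow> real" where
  "Hm H = (\<Sum>a\<in>spins. \<Sum>b\<in>spins. norm (H a b))"

lemma Hm_nonneg: "Hm H \<ge> 0"
  unfolding Hm_def by (intro sum_nonneg) auto

lemma Hm_ge: "a \<in> spins \<Longrightarrow> b \<in> spins \<Longrightarrow> norm (H a b) \<le> Hm H"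
proof -
  assume a: "a \<in> spins" and b: "b \<in> spins"
  have fin: "finite spins" by (simp add: spins_def)
  have "norm (H a b) \<le> (\<Sum>b\<in>spins. norm (H a b))"
    using b fin by (intro member_le_sum) auto
  also have "\<dots> \<le> Hm H" unfolding Hm_def
    using a fin by (intro member_le_sum[where f="\<lambda>a. \<Sum>b\<in>spins. norm (H a b)"]) (auto intro: sum_nonneg)
  finally show ?thesis .
qed

lemma flipfac_bound: "r0 \<in> spins \<times> spins \<Longrightarrow> norm (flipfac H r0 sg j) \<le> Hm H"
proof -
  assume "r0 \<in> spins \<times> spins"
  then have "\<And>k. fst (pstate r0 sg k) \<in> spins \<and> snd (pstate r0 sg k) \<in> spins"
    using pstate_spins by (metis mem_Times_iff)
  then have a: "\<And>k. fst (pstate r0 sg k) \<in> spins" and b: "\<And>k. snd (pstate r0 sg k) \<in> spins" by auto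
  have "norm (- \<i> * H (fst (pstate r0 sg j)) (fst (pstate r0 sg (j - 1)))) \<le> Hm H"
    unfolding norm_mult by (simp add: Hm_ge a)
  moreover have "norm (\<i> * H (snd (pstate r0 sg (j - 1))) (snd (pstate r0 sg j))) \<le> Hm H"
    unfolding norm_mult by (simp add: Hm_ge b)
  ultimately show ?thesis unfolding flipfac_def by simp
qed

lemma segweight_bound:
  assumes "hermitian2 H" "r0 \<in> spins \<times> spins"
  shows "norm (segweight H r0 sg \<tau> L) \<le> Hm H ^ length sg"
proof -
  have e: "(\<Prod>j\<in>{0..length sg}. norm (exp (- \<i> * energy H (pstate r0 sg j) * complex_of_real (piecelen sg \<tau> L j)))) = 1"
    by (rule prod.neutral) (use norm_exp_energy[OF assms(1) pstate_spins[OF assms(2)]] in blast)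
  have "norm (segweight H r0 sg \<tau> L) = (\<Prod>j\<in>{1..length sg}. norm (flipfac H r0 sg j))"
    unfolding segweight_def norm_mult prod_norm[symmetric] e by simp
  also have "\<dots> \<le> (\<Prod>j\<in>{1..length sg}. Hm H)"
    by (intro prod_mono conjI norm_ge_zero flipfac_bound assms)
  finally show ?thesis by simp
qed

definition Rm :: "(int \<Rightarrow> int \<Rightarrow> complex) \<Rightarrow> real" where
  "Rm R = (\<Sum>a\<in>spins. \<Sum>b\<in>spins. norm (R a b))"

lemma Xw_bound:
  assumes "hermitian2 H" "r0 \<in> spins \<times> spins"
  shows "norm (Xw H \<rho> r0 sg \<tau> L) \<le> Hm \<rho> * Hm H ^ length sg"
  unfolding Xw_def norm_mult using assms
  by (intro mult_mono segweight_bound Hm_ge) (auto simp: Hm_nonneg)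



lemma dct_set:
  fixes s :: "nat \<Rightarrow> 'a \<Rightarrow> 'b::{banach, second_countable_topology}"
  assumes A: "A \<in> sets M" "emeasure M A < \<infinity>"
    and ms: "\<And>n. s n \<in> borel_measurable M" and mf: "f \<in> borel_measurable M"
    and bd: "\<And>n x. x \<in> A \<Longrightarrow> norm (s n x) \<le> B"
    and lim: "AE x in M. x \<in> A \<longrightarrow> (\<lambda>n. s n x) \<longlonglongrightarrow> f x"
  shows "(\<lambda>n. LINT x:A|M. s n x) \<longlonglongrightarrow> (LINT x:A|M. f x)"
  unfolding set_lebesgue_integral_def
proof (rule integral_dominated_convergence[where w="\<lambda>x. indicator A x * B"])
  show "(\<lambda>x. indicator A x *\<^sub>R f x) \<in> borel_measurable M"
    using A mf by measurable
  show "(\<lambda>x. indicator A x *\<^sub>R s n x) \<in> borel_measurable M" for n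
    using A ms[of n] by measurable
  show "integrable M (\<lambda>x. indicator A x * B)"
    using A by (intro integrableI_bounded_set[where A=A and B="\<bar>B\<bar>"]) auto
  show "AE x in M. (\<lambda>n. indicator A x *\<^sub>R s n x) \<longlonglongrightarrow> indicator A x *\<^sub>R f x"
    using lim by eventually_elim (auto simp: indicator_def)
  show "AE x in M. norm (indicator A x *\<^sub>R s n x) \<le> indicator A x * B" for n
    by (intro AE_I2) (auto simp: indicator_def bd)
qed

lemma set_integral_norm_le:
  fixes f :: "'a \<Rightarrow> 'b::{banach, second_countable_topology}"
  assumes A: "A \<in> sets M" "emeasure M A < \<infinity>" and B: "B \<ge> 0"
    and bd: "\<And>x. x \<in> A \<Longrightarrow> norm (f x) \<le> B"
  shows "norm (LINT x:A|M. f x) \<le> B * measure M A"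
proof (cases "set_integrable M A f")
  case True
  have ci: "set_integrable M A (\<lambda>x. B)"
    unfolding set_integrable_def
    using A by (intro integrableI_bounded_set[where A=A and B="\<bar>B\<bar>"]) auto
  have "norm (LINT x:A|M. f x) \<le> (LINT x:A|M. norm (f x))"
    by (rule set_integral_norm_bound[OF True])
  also have "\<dots> \<le> (LINT x:A|M. B)"
    by (rule set_integral_mono[OF set_integrable_norm[OF True] ci bd])
  also have "\<dots> = B * measure M A"
    using A by (simp add: set_integral_const)
  finally show ?thesis .
next
  case False
  then have "(LINT x:A|M. f x) = 0"
    unfolding set_lebesgue_integral_def set_integrable_def by (rule not_integrable_integral_eq)
  then show ?thesis using B by simp
qed

lemma AE_finite_lborel: "finite N \<Longrightarrow> AE x in lborel. x \<notin> N"
  by (intro AE_not_in finite_imp_null_set_lborel)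

lemma measure_Icc_le: "measure lborel {a..b::real} \<le> max 0 (b - a)"
  by (cases "a \<le> b") auto

lemma meas_slice:
  assumes "(\<lambda>z. F (fst z) (snd z)) \<in> borel_measurable (lborel \<Otimes>\<^sub>M lborel)"
  shows "(\<lambda>y. F x y) \<in> borel_measurable lborel"
proof -
  have "Pair x \<in> measurable lborel (lborel \<Otimes>\<^sub>M lborel)" by measurable
  from measurable_compose[OF this assms] show ?thesis by (simp add: o_def)
qed

lemma meas_inner:
  fixes F :: "real \<Rightarrow> real \<Rightarrow> complex"
  assumes mF: "(\<lambda>z. F (fst z) (snd z)) \<in> borel_measurable (lborel \<Otimes>\<^sub>M lborel)"
    and mlo: "lo \<in> borel_measurable lborel" and mhi: "hi \<in> borel_measurable lborel"
  shows "(\<lambda>x. LINT y:{lo x..hi x}|lborel. F x y) \<in> borel_measurable lborel"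
proof -
  have m: "(\<lambda>z. if lo (fst z) \<le> snd z \<and> snd z \<le> hi (fst z) then F (fst z) (snd z) else 0) \<in> borel_measurable (lborel \<Otimes>\<^sub>M lborel)"
    using mF mlo mhi by measurable
  have e: "case_prod (\<lambda>x y. indicator {lo x..hi x} y *\<^sub>R F x y) = (\<lambda>z. if lo (fst z) \<le> snd z \<and> snd z \<le> hi (fst z) then F (fst z) (snd z) else 0)"
    by (auto simp: indicator_def fun_eq_iff)
  show ?thesis
    unfolding set_lebesgue_integral_def
    by (rule lborel.borel_measurable_lebesgue_integral) (use m e in simp)
qed

lemma nested_dct:
  fixes \<Phi> :: "nat \<Rightarrow> real \<Rightarrow> real \<Rightarrow> complex" and \<Psi> :: "real \<Rightarrow> real \<Rightarrow> complex"
  assumes m\<Phi>: "\<And>n. (\<lambda>z. \<Phi> n (fst z) (snd z)) \<in> borel_measurable (lborel \<Otimes>\<^sub>M lborel)"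
    and m\<Psi>: "(\<lambda>z. \<Psi> (fst z) (snd z)) \<in> borel_measurable (lborel \<Otimes>\<^sub>M lborel)"
    and mlo: "lo \<in> borel_measurable lborel" and mhi: "hi \<in> borel_measurable lborel"
    and c: "c \<ge> 0"
    and bd: "\<And>n x1 x2. x1 \<in> {a..b} \<Longrightarrow> x2 \<in> {lo x1..hi x1} \<Longrightarrow> norm (\<Phi> n x1 x2) \<le> c"
    and K: "\<And>x1. x1 \<in> {a..b} \<Longrightarrow> hi x1 - lo x1 \<le> K"
    and fin: "finite N"
    and ev: "\<And>x1 x2. x1 \<notin> N \<Longrightarrow> x2 \<notin> N \<Longrightarrow> eventually (\<lambda>n. \<Phi> n x1 x2 = \<Psi> x1 x2) sequentially"
  shows "(\<lambda>n. LINT x1:{a..b}|lborel. LINT x2:{lo x1..hi x1}|lborel. \<Phi> n x1 x2)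
           \<longlonglongrightarrow> (LINT x1:{a..b}|lborel. LINT x2:{lo x1..hi x1}|lborel. \<Psi> x1 x2)"
proof (rule dct_set[where B="c * max 0 K"])
  show "{a..b} \<in> sets lborel" "emeasure lborel {a..b} < \<infinity>" by (auto simp: emeasure_lborel_Icc_eq)
  show "(\<lambda>x1. LINT x2:{lo x1..hi x1}|lborel. \<Phi> n x1 x2) \<in> borel_measurable lborel" for n
    by (rule meas_inner[OF m\<Phi> mlo mhi])
  show "(\<lambda>x1. LINT x2:{lo x1..hi x1}|lborel. \<Psi> x1 x2) \<in> borel_measurable lborel"
    by (rule meas_inner[OF m\<Psi> mlo mhi])
  show "norm (LINT x2:{lo x1..hi x1}|lborel. \<Phi> n x1 x2) \<le> c * max 0 K" if x1: "x1 \<in> {a..b}" for n x1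
  proof -
    have "norm (LINT x2:{lo x1..hi x1}|lborel. \<Phi> n x1 x2) \<le> c * measure lborel {lo x1..hi x1}"
      by (rule set_integral_norm_le) (auto intro: c bd[OF x1] simp: emeasure_lborel_Icc_eq)
    also have "\<dots> \<le> c * max 0 K"
      using measure_Icc_le[of "lo x1" "hi x1"] K[OF x1] c
      by (intro mult_left_mono) auto
    finally show ?thesis .
  qed
  show "AE x1 in lborel. x1 \<in> {a..b} \<longrightarrow> (\<lambda>n. LINT x2:{lo x1..hi x1}|lborel. \<Phi> n x1 x2) \<longlonglongrightarrow> (LINT x2:{lo x1..hi x1}|lborel. \<Psi> x1 x2)"
    using AE_finite_lborel[OF fin]
  proof eventually_elim
    case (elim x1)
    show ?case
    proof
      assume x1: "x1 \<in> {a..b}"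
      show "(\<lambda>n. LINT x2:{lo x1..hi x1}|lborel. \<Phi> n x1 x2) \<longlonglongrightarrow> (LINT x2:{lo x1..hi x1}|lborel. \<Psi> x1 x2)"
      proof (rule dct_set[where B=c])
        show "{lo x1..hi x1} \<in> sets lborel" "emeasure lborel {lo x1..hi x1} < \<infinity>" by (auto simp: emeasure_lborel_Icc_eq)
        show "\<Phi> n x1 \<in> borel_measurable lborel" for n using meas_slice[OF m\<Phi>[of n]] by simp
        show "\<Psi> x1 \<in> borel_measurable lborel" using meas_slice[OF m\<Psi>] by simp
        show "norm (\<Phi> n x1 x2) \<le> c" if "x2 \<in> {lo x1..hi x1}" for n x2 using bd[OF x1 that] .
        show "AE x2 in lborel. x2 \<in> {lo x1..hi x1} \<longrightarrow> (\<lambda>n. \<Phi> n x1 x2) \<longlonglongrightarrow> \<Psi> x1 x2"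
          using AE_finite_lborel[OF fin]
          by eventually_elim (intro impI tendsto_eventually ev elim; assumption)
      qed
    qed
  qed
qed



lemma card_Suc_split: "card {k. k < Suc n \<and> P k} = card {k. k < n \<and> P k} + (if P n then 1 else 0)"
proof -
  have "{k. k < Suc n \<and> P k} = {k. k < n \<and> P k} \<union> (if P n then {n} else {})"
    by (auto simp: less_Suc_eq)
  then show ?thesis by (auto simp: card_insert_if)
qed

lemma card_meas:
  fixes n :: nat
  assumes "\<And>k. Measurable.pred M (P k)"
  shows "(\<lambda>w. card {k. k < n \<and> P k w}) \<in> measurable M (count_space UNIV)"
proof (induction n)
  case 0
  then show ?case by simp
next
  case (Suc n)
  have e: "(\<lambda>w. card {k. k < Suc n \<and> P k w}) = (\<lambda>w. (\<lambda>i w. if P n w then i + 1 else i) (card {k. k < n \<and> P k w}) w)"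
    by (auto simp: card_Suc_split fun_eq_iff)
  show ?case unfolding e
  proof (rule measurable_compose_countable[OF _ Suc])
    fix i :: nat
    show "(\<lambda>w. if P n w then i + 1 else i) \<in> measurable M (count_space UNIV)"
      using assms[of n] by measurable
  qed
qed

lemma pathseg_meas:
  fixes G :: "'w \<Rightarrow> nat \<Rightarrow> real"
  assumes G: "G \<in> borel_measurable M" and X: "X \<in> borel_measurable M"
  shows "(\<lambda>w. pathseg r0 sg (G w) (X w)) \<in> measurable M (count_space UNIV)"
proof -
  have c: "\<And>i. (\<lambda>w. G w i) \<in> borel_measurable M"
    using measurable_product_then_coordinatewise[OF G] .
  have "(\<lambda>w. card {k. k < length sg \<and> (\<Sum>i\<le>k. G w i) \<le> X w}) \<in> measurable M (count_space UNIV)"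
    by (rule card_meas) (use c X in measurable)
  then show ?thesis unfolding pathseg_def
    by (rule measurable_compose) simp
qed

lemma pp_pathseg_meas:
  fixes G :: "'w \<Rightarrow> nat \<Rightarrow> real"
  assumes G: "G \<in> borel_measurable M" and X: "X \<in> borel_measurable M"
  shows "(\<lambda>w. pp (pathseg r0 sg (G w) (X w))) \<in> borel_measurable M"
    and "(\<lambda>w. pm (pathseg r0 sg (G w) (X w))) \<in> borel_measurable M"
  using measurable_compose[OF pathseg_meas[OF G X], of pp borel]
        measurable_compose[OF pathseg_meas[OF G X], of pm borel]
  by (auto simp: measurable_count_space_eq1)

lemma borel_measurable_cnj' [measurable]:
  assumes "f \<in> borel_measurable M"
  shows "(\<lambda>x. cnj (f x :: complex)) \<in> borel_measurable M"
proof -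
  have "cnj \<in> borel_measurable borel"
    by (intro borel_measurable_continuous_onI continuous_intros)
  from measurable_compose[OF assms this] show ?thesis by (simp add: o_def)
qed

lemma indicator_Icc_if: "indicator {a..b} x = (if a \<le> x \<and> x \<le> b then 1 else 0)"
  by (auto simp: indicator_def)

lemma Zphase_meas:
  fixes \<gamma> \<delta> :: "'w \<Rightarrow> real \<Rightarrow> int \<times> int"
  assumes \<eta>[measurable]: "\<eta> \<in> borel_measurable borel"
    and g1[measurable]: "(\<lambda>z. pp (\<gamma> (fst z) (snd z))) \<in> borel_measurable (M \<Otimes>\<^sub>M lborel)"
    and g2[measurable]: "(\<lambda>z. pm (\<gamma> (fst z) (snd z))) \<in> borel_measurable (M \<Otimes>\<^sub>M lborel)"
    and h1[measurable]: "(\<lambda>z. pp (\<delta> (fst z) (snd z))) \<in> borel_measurable (M \<Otimes>\<^sub>M lborel)"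
    and h2[measurable]: "(\<lambda>z. pm (\<delta> (fst z) (snd z))) \<in> borel_measurable (M \<Otimes>\<^sub>M lborel)"
  shows "(\<lambda>w. Zphase \<eta> T t (\<gamma> w) (\<delta> w)) \<in> borel_measurable M"
proof -
  have cmp: "(\<lambda>z. F (fst (fst z)) (snd z)) \<in> borel_measurable ((M \<Otimes>\<^sub>M lborel) \<Otimes>\<^sub>M lborel)"
     "(\<lambda>z. F (fst (fst z)) (snd (fst z))) \<in> borel_measurable ((M \<Otimes>\<^sub>M lborel) \<Otimes>\<^sub>M lborel)"
     "(\<lambda>z. F (fst (fst z)) (snd (fst z) - t)) \<in> borel_measurable ((M \<Otimes>\<^sub>M lborel) \<Otimes>\<^sub>M lborel)"
    if F: "(\<lambda>z. F (fst z) (snd z)) \<in> borel_measurable (M \<Otimes>\<^sub>M lborel)" for F :: "'w \<Rightarrow> real \<Rightarrow> complex"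
  proof -
    have a: "(\<lambda>z. (fst (fst z), snd z)) \<in> measurable ((M \<Otimes>\<^sub>M lborel) \<Otimes>\<^sub>M lborel) (M \<Otimes>\<^sub>M lborel)"
      and b: "(\<lambda>z. (fst (fst z), snd (fst z))) \<in> measurable ((M \<Otimes>\<^sub>M lborel) \<Otimes>\<^sub>M lborel) (M \<Otimes>\<^sub>M lborel)"
      and c: "(\<lambda>z. (fst (fst z), snd (fst z) - t)) \<in> measurable ((M \<Otimes>\<^sub>M lborel) \<Otimes>\<^sub>M lborel) (M \<Otimes>\<^sub>M lborel)"
      by measurable
    show "(\<lambda>z. F (fst (fst z)) (snd z)) \<in> borel_measurable ((M \<Otimes>\<^sub>M lborel) \<Otimes>\<^sub>M lborel)"
      using measurable_compose[OF a F] by (simp add: o_def)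
    show "(\<lambda>z. F (fst (fst z)) (snd (fst z))) \<in> borel_measurable ((M \<Otimes>\<^sub>M lborel) \<Otimes>\<^sub>M lborel)"
      using measurable_compose[OF b F] by (simp add: o_def)
    show "(\<lambda>z. F (fst (fst z)) (snd (fst z) - t)) \<in> borel_measurable ((M \<Otimes>\<^sub>M lborel) \<Otimes>\<^sub>M lborel)"
      using measurable_compose[OF c F] by (simp add: o_def)
  qed
  have cmp1: "(\<lambda>z. F (fst z) (snd z - t)) \<in> borel_measurable (M \<Otimes>\<^sub>M lborel)"
    if F: "(\<lambda>z. F (fst z) (snd z)) \<in> borel_measurable (M \<Otimes>\<^sub>M lborel)" for F :: "'w \<Rightarrow> real \<Rightarrow> complex"
  proof -
    have c: "(\<lambda>z. (fst z, snd z - t)) \<in> measurable (M \<Otimes>\<^sub>M lborel) (M \<Otimes>\<^sub>M lborel)"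
      by measurable
    show ?thesis using measurable_compose[OF c F] by (simp add: o_def)
  qed
  note [measurable] = cmp[OF g1] cmp[OF g2] cmp[OF h1] cmp[OF h2] cmp1[OF h1] cmp1[OF h2]
  show ?thesis
    unfolding Zphase_def set_lebesgue_integral_def indicator_Icc_if
    by measurable
qed



lemma phi_bound:
  assumes "r1 \<in> spins \<times> spins" "r2 \<in> spins \<times> spins" "norm e \<le> E"
  shows "norm ((pp r1 - pm r1) * (pp r2 * e - pm r2 * cnj e)) \<le> 2 * (2 * E)"
proof -
  have "norm (pp r1 - pm r1) \<le> 2"
    using norm_triangle_ineq4[of "pp r1" "pm r1"] pp_norm[OF assms(1)] pm_norm[OF assms(1)] by simp
  moreover have "norm (pp r2 * e - pm r2 * cnj e) \<le> 2 * E"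
    using norm_triangle_ineq4[of "pp r2 * e" "pm r2 * cnj e"] pp_norm[OF assms(2)] pm_norm[OF assms(2)] assms(3)
    by (simp add: norm_mult)
  ultimately show ?thesis unfolding norm_mult
    by (intro mult_mono) auto
qed

lemma pathseg_ev:
  assumes u: "\<And>k. k < length sg \<Longrightarrow> (\<lambda>n. u n k) \<longlonglongrightarrow> \<tau>' k"
    and x: "x \<notin> (\<lambda>k. \<Sum>i\<le>k. \<tau>' i) ` {..<length sg}"
  shows "eventually (\<lambda>n. pathseg r0 sg (u n) x = pathseg r0 sg \<tau>' x) sequentially"
proof -
  have "\<forall>k\<in>{..<length sg}. eventually (\<lambda>n. ((\<Sum>i\<le>k. u n i) \<le> x) = ((\<Sum>i\<le>k. \<tau>' i) \<le> x)) sequentially"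
  proof
    fix k assume k: "k \<in> {..<length sg}"
    have lim: "(\<lambda>n. \<Sum>i\<le>k. u n i) \<longlonglongrightarrow> (\<Sum>i\<le>k. \<tau>' i)"
      using k by (intro tendsto_sum u) auto
    have ne: "(\<Sum>i\<le>k. \<tau>' i) \<noteq> x" using x k by auto
    show "eventually (\<lambda>n. ((\<Sum>i\<le>k. u n i) \<le> x) = ((\<Sum>i\<le>k. \<tau>' i) \<le> x)) sequentially"
    proof (cases "(\<Sum>i\<le>k. \<tau>' i) < x")
      case True
      from order_tendstoD(2)[OF lim True] show ?thesis
        by eventually_elim (use True ne in auto)
    next
      case False
      then have "x < (\<Sum>i\<le>k. \<tau>' i)" using ne by auto
      from order_tendstoD(1)[OF lim this] show ?thesis
        by eventually_elim (use False ne in auto)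
    qed
  qed
  from eventually_ball_finite[OF _ this] show ?thesis
    unfolding pathseg_def
    by (rule eventually_mono) (auto intro!: arg_cong[where f="pstate r0 sg"] arg_cong[where f=card])
qed

lemma Zphase_conv:
  fixes g :: "real \<Rightarrow> int \<times> int" and \<eta> :: "real \<Rightarrow> complex"
  assumes \<eta>[measurable]: "\<eta> \<in> borel_measurable borel" and E: "\<And>s. s \<in> {0..T} \<Longrightarrow> norm (\<eta> s) \<le> E"
    and T: "T > 0" and t: "t \<ge> 0"
    and gs: "\<And>x. g x \<in> spins \<times> spins" and r0: "r0 \<in> spins \<times> spins"
    and gm1: "(\<lambda>x. pp (g x)) \<in> borel_measurable lborel" and gm2: "(\<lambda>x. pm (g x)) \<in> borel_measurable lborel"
    and u: "\<And>k. k < length sg \<Longrightarrow> (\<lambda>n. u n k) \<longlonglongrightarrow> \<tau>' k"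
  shows "(\<lambda>n. Zphase \<eta> T t g (pathseg r0 sg (u n))) \<longlonglongrightarrow> Zphase \<eta> T t g (pathseg r0 sg \<tau>')"
proof -
  define Bad where "Bad = (\<lambda>k. \<Sum>i\<le>k. \<tau>' i) ` {..<length sg}"
  have finBad: "finite Bad" unfolding Bad_def by simp
  have E0: "E \<ge> 0" using E[of 0] T by (auto intro: order_trans[OF norm_ge_zero])
  have ev: "eventually (\<lambda>n. pathseg r0 sg (u n) x = pathseg r0 sg \<tau>' x) sequentially" if "x \<notin> Bad" for x
    using pathseg_ev[OF u that[unfolded Bad_def]] by blast
  have gsnd1[measurable]: "(\<lambda>z. pp (g (snd z))) \<in> borel_measurable (lborel \<Otimes>\<^sub>M lborel)"
    using measurable_compose[OF measurable_snd[of lborel lborel] gm1] by (simp add: o_def)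
  have gsnd2[measurable]: "(\<lambda>z. pm (g (snd z))) \<in> borel_measurable (lborel \<Otimes>\<^sub>M lborel)"
    using measurable_compose[OF measurable_snd[of lborel lborel] gm2] by (simp add: o_def)
  have hm: "(\<lambda>z. pp (pathseg r0 sg v (X z))) \<in> borel_measurable (lborel \<Otimes>\<^sub>M lborel)"
           "(\<lambda>z. pm (pathseg r0 sg v (X z))) \<in> borel_measurable (lborel \<Otimes>\<^sub>M lborel)"
    if "X \<in> borel_measurable (lborel \<Otimes>\<^sub>M lborel)" for v X
    using pp_pathseg_meas[of "\<lambda>_. v" "lborel \<Otimes>\<^sub>M lborel" X r0 sg] that by auto
  have X1: "(\<lambda>z::real\<times>real. fst z - t) \<in> borel_measurable (lborel \<Otimes>\<^sub>M lborel)"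
    and X2: "(\<lambda>z::real\<times>real. fst z) \<in> borel_measurable (lborel \<Otimes>\<^sub>M lborel)"
    and X3: "(\<lambda>z::real\<times>real. snd z) \<in> borel_measurable (lborel \<Otimes>\<^sub>M lborel)" by measurable
  note hms[measurable] = hm[OF X1] hm[OF X2] hm[OF X3]
  have term2: "(\<lambda>n. LINT x1:{t..t+T}|lborel. LINT x2:{(\<lambda>x1. max 0 (x1 - T)) x1..(\<lambda>x1. t) x1}|lborel.
        (\<lambda>n x1 x2. (pp (pathseg r0 sg (u n) (x1 - t)) - pm (pathseg r0 sg (u n) (x1 - t))) * (pp (g x2) * \<eta> (x1 - x2) - pm (g x2) * cnj (\<eta> (x1 - x2)))) n x1 x2)
      \<longlonglongrightarrow> (LINT x1:{t..t+T}|lborel. LINT x2:{(\<lambda>x1. max 0 (x1 - T)) x1..(\<lambda>x1. t) x1}|lborel.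
        (\<lambda>x1 x2. (pp (pathseg r0 sg \<tau>' (x1 - t)) - pm (pathseg r0 sg \<tau>' (x1 - t))) * (pp (g x2) * \<eta> (x1 - x2) - pm (g x2) * cnj (\<eta> (x1 - x2)))) x1 x2)"
  proof (rule nested_dct[where c="2 * (2 * E)" and K=t and N="Bad \<union> (\<lambda>y. y + t) ` Bad"])
    show "(\<lambda>z. (pp (pathseg r0 sg (u n) (fst z - t)) - pm (pathseg r0 sg (u n) (fst z - t))) * (pp (g (snd z)) * \<eta> (fst z - snd z) - pm (g (snd z)) * cnj (\<eta> (fst z - snd z)))) \<in> borel_measurable (lborel \<Otimes>\<^sub>M lborel)" for n
      by measurable
    show "(\<lambda>z. (pp (pathseg r0 sg \<tau>' (fst z - t)) - pm (pathseg r0 sg \<tau>' (fst z - t))) * (pp (g (snd z)) * \<eta> (fst z - snd z) - pm (g (snd z)) * cnj (\<eta> (fst z - snd z)))) \<in> borel_measurable (lborel \<Otimes>\<^sub>M lborel)"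
      by measurable
    show "(\<lambda>x1. max 0 (x1 - T)) \<in> borel_measurable lborel" "(\<lambda>x1. t) \<in> borel_measurable lborel" by measurable
    show "0 \<le> 2 * (2 * E)" using E0 by simp
    show "norm ((pp (pathseg r0 sg (u n) (x1 - t)) - pm (pathseg r0 sg (u n) (x1 - t))) * (pp (g x2) * \<eta> (x1 - x2) - pm (g x2) * cnj (\<eta> (x1 - x2)))) \<le> 2 * (2 * E)"
      if "x1 \<in> {t..t+T}" "x2 \<in> {max 0 (x1 - T)..t}" for n x1 x2
      by (rule phi_bound[OF pathseg_spins[OF r0] gs E]) (use that in auto)
    show "t - max 0 (x1 - T) \<le> t" for x1 by simp
    show "finite (Bad \<union> (\<lambda>y. y + t) ` Bad)" using finBad by simp
    show "eventually (\<lambda>n. (pp (pathseg r0 sg (u n) (x1 - t)) - pm (pathseg r0 sg (u n) (x1 - t))) * (pp (g x2) * \<eta> (x1 - x2) - pm (g x2) * cnj (\<eta> (x1 - x2)))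
          = (pp (pathseg r0 sg \<tau>' (x1 - t)) - pm (pathseg r0 sg \<tau>' (x1 - t))) * (pp (g x2) * \<eta> (x1 - x2) - pm (g x2) * cnj (\<eta> (x1 - x2)))) sequentially"
      if "x1 \<notin> Bad \<union> (\<lambda>y. y + t) ` Bad" "x2 \<notin> Bad \<union> (\<lambda>y. y + t) ` Bad" for x1 x2
    proof -
      have "x1 - t \<notin> Bad" using that(1) by (auto simp: image_iff)
      from ev[OF this] show ?thesis by eventually_elim simp
    qed
  qed
  have term3: "(\<lambda>n. LINT x1:{0..T}|lborel. LINT x2:{(\<lambda>x1. 0) x1..(\<lambda>x1. x1) x1}|lborel.
        (\<lambda>n x1 x2. (pp (pathseg r0 sg (u n) x1) - pm (pathseg r0 sg (u n) x1)) * (pp (pathseg r0 sg (u n) x2) * \<eta> (x1 - x2) - pm (pathseg r0 sg (u n) x2) * cnj (\<eta> (x1 - x2)))) n x1 x2)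
      \<longlonglongrightarrow> (LINT x1:{0..T}|lborel. LINT x2:{(\<lambda>x1. 0) x1..(\<lambda>x1. x1) x1}|lborel.
        (\<lambda>x1 x2. (pp (pathseg r0 sg \<tau>' x1) - pm (pathseg r0 sg \<tau>' x1)) * (pp (pathseg r0 sg \<tau>' x2) * \<eta> (x1 - x2) - pm (pathseg r0 sg \<tau>' x2) * cnj (\<eta> (x1 - x2)))) x1 x2)"
  proof (rule nested_dct[where c="2 * (2 * E)" and K=T and N="Bad"])
    show "(\<lambda>z. (pp (pathseg r0 sg (u n) (fst z)) - pm (pathseg r0 sg (u n) (fst z))) * (pp (pathseg r0 sg (u n) (snd z)) * \<eta> (fst z - snd z) - pm (pathseg r0 sg (u n) (snd z)) * cnj (\<eta> (fst z - snd z)))) \<in> borel_measurable (lborel \<Otimes>\<^sub>M lborel)" for n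
      by measurable
    show "(\<lambda>z. (pp (pathseg r0 sg \<tau>' (fst z)) - pm (pathseg r0 sg \<tau>' (fst z))) * (pp (pathseg r0 sg \<tau>' (snd z)) * \<eta> (fst z - snd z) - pm (pathseg r0 sg \<tau>' (snd z)) * cnj (\<eta> (fst z - snd z)))) \<in> borel_measurable (lborel \<Otimes>\<^sub>M lborel)"
      by measurable
    show "(\<lambda>x1. 0::real) \<in> borel_measurable lborel" "(\<lambda>x1::real. x1) \<in> borel_measurable lborel" by measurable
    show "0 \<le> 2 * (2 * E)" using E0 by simp
    show "norm ((pp (pathseg r0 sg (u n) x1) - pm (pathseg r0 sg (u n) x1)) * (pp (pathseg r0 sg (u n) x2) * \<eta> (x1 - x2) - pm (pathseg r0 sg (u n) x2) * cnj (\<eta> (x1 - x2)))) \<le> 2 * (2 * E)"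
      if "x1 \<in> {0..T}" "x2 \<in> {0..x1}" for n x1 x2
      by (rule phi_bound[OF pathseg_spins[OF r0] pathseg_spins[OF r0] E]) (use that in auto)
    show "x1 - 0 \<le> T" if "x1 \<in> {0..T}" for x1 using that by simp
    show "finite Bad" by (rule finBad)
    show "eventually (\<lambda>n. (pp (pathseg r0 sg (u n) x1) - pm (pathseg r0 sg (u n) x1)) * (pp (pathseg r0 sg (u n) x2) * \<eta> (x1 - x2) - pm (pathseg r0 sg (u n) x2) * cnj (\<eta> (x1 - x2)))
          = (pp (pathseg r0 sg \<tau>' x1) - pm (pathseg r0 sg \<tau>' x1)) * (pp (pathseg r0 sg \<tau>' x2) * \<eta> (x1 - x2) - pm (pathseg r0 sg \<tau>' x2) * cnj (\<eta> (x1 - x2)))) sequentially"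
      if "x1 \<notin> Bad" "x2 \<notin> Bad" for x1 x2
      using ev[OF that(1)] ev[OF that(2)] by eventually_elim simp
  qed
  show ?thesis
    unfolding Zphase_def
    by (intro tendsto_diff tendsto_const) (use term2 term3 in simp_all)
qed



lemma Zphase_bound:
  fixes \<eta> :: "real \<Rightarrow> complex"
  assumes E: "\<And>s. s \<in> {0..T} \<Longrightarrow> norm (\<eta> s) \<le> E" and E0: "E \<ge> 0"
    and T: "T > 0" and t: "t \<ge> 0"
    and gs: "\<And>x. g x \<in> spins \<times> spins" and hs: "\<And>x. h x \<in> spins \<times> spins"
  shows "norm (Zphase \<eta> T t g h) \<le> 3 * (4 * E * (t + T) * (t + T))"
proof -
  define L where "L = t + T"
  have L0: "L \<ge> 0" using t T by (simp add: L_def)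
  have gen: "norm (LINT x1:{a..b}|lborel. LINT x2:{lo x1..hi x1}|lborel. (pp (p x1) - pm (p x1)) * (pp (q x2) * \<eta> (x1 - x2) - pm (q x2) * cnj (\<eta> (x1 - x2))))
      \<le> 4 * E * L * L"
    if ab: "b - a \<le> L" and lh: "\<And>x1. x1 \<in> {a..b} \<Longrightarrow> hi x1 - lo x1 \<le> L"
      and rng: "\<And>x1 x2. x1 \<in> {a..b} \<Longrightarrow> x2 \<in> {lo x1..hi x1} \<Longrightarrow> x1 - x2 \<in> {0..T}"
      and ps: "\<And>x. p x \<in> spins \<times> spins" and qs: "\<And>x. q x \<in> spins \<times> spins"
    for a b lo hi and p q :: "real \<Rightarrow> int \<times> int"
  proof -
    have "norm (LINT x1:{a..b}|lborel. LINT x2:{lo x1..hi x1}|lborel. (pp (p x1) - pm (p x1)) * (pp (q x2) * \<eta> (x1 - x2) - pm (q x2) * cnj (\<eta> (x1 - x2))))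
        \<le> (4 * E * L) * measure lborel {a..b}"
    proof (rule set_integral_norm_le)
      show "{a..b} \<in> sets lborel" "emeasure lborel {a..b} < \<infinity>" by (auto simp: emeasure_lborel_Icc_eq)
      show "0 \<le> 4 * E * L" using E0 L0 by simp
      fix x1 assume x1: "x1 \<in> {a..b}"
      have "norm (LINT x2:{lo x1..hi x1}|lborel. (pp (p x1) - pm (p x1)) * (pp (q x2) * \<eta> (x1 - x2) - pm (q x2) * cnj (\<eta> (x1 - x2))))
          \<le> (2 * (2 * E)) * measure lborel {lo x1..hi x1}"
      proof (rule set_integral_norm_le)
        show "{lo x1..hi x1} \<in> sets lborel" "emeasure lborel {lo x1..hi x1} < \<infinity>" by (auto simp: emeasure_lborel_Icc_eq)
        show "0 \<le> 2 * (2 * E)" using E0 by simp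
        fix x2 assume x2: "x2 \<in> {lo x1..hi x1}"
        show "norm ((pp (p x1) - pm (p x1)) * (pp (q x2) * \<eta> (x1 - x2) - pm (q x2) * cnj (\<eta> (x1 - x2)))) \<le> 2 * (2 * E)"
          by (rule phi_bound[OF ps qs E[OF rng[OF x1 x2]]])
      qed
      also have "\<dots> \<le> (2 * (2 * E)) * L"
        using measure_Icc_le[of "lo x1" "hi x1"] lh[OF x1] E0 L0
        by (intro mult_left_mono) auto
      finally show "norm (LINT x2:{lo x1..hi x1}|lborel. (pp (p x1) - pm (p x1)) * (pp (q x2) * \<eta> (x1 - x2) - pm (q x2) * cnj (\<eta> (x1 - x2)))) \<le> 4 * E * L"
        by simp
    qed
    also have "\<dots> \<le> (4 * E * L) * L"
      using measure_Icc_le[of a b] ab E0 L0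
      by (intro mult_left_mono) auto
    finally show ?thesis by simp
  qed
  have t1: "norm (LINT x1:{0..t}|lborel. LINT x2:{max 0 (x1 - T)..x1}|lborel. (pp (g x1) - pm (g x1)) * (pp (g x2) * \<eta> (x1 - x2) - pm (g x2) * cnj (\<eta> (x1 - x2)))) \<le> 4 * E * L * L"
    by (rule gen[where lo="\<lambda>x1. max 0 (x1 - T)" and hi="\<lambda>x1. x1"]) (use gs t T in \<open>auto simp: L_def\<close>)
  have t2: "norm (LINT x1:{t..t+T}|lborel. LINT x2:{max 0 (x1 - T)..t}|lborel. (pp (h (x1 - t)) - pm (h (x1 - t))) * (pp (g x2) * \<eta> (x1 - x2) - pm (g x2) * cnj (\<eta> (x1 - x2)))) \<le> 4 * E * L * L"
    by (rule gen[where lo="\<lambda>x1. max 0 (x1 - T)" and hi="\<lambda>x1. t" and p="\<lambda>x. h (x - t)"]) (use gs hs t T in \<open>auto simp: L_def\<close>)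
  have t3: "norm (LINT x1:{0..T}|lborel. LINT x2:{0..x1}|lborel. (pp (h x1) - pm (h x1)) * (pp (h x2) * \<eta> (x1 - x2) - pm (h x2) * cnj (\<eta> (x1 - x2)))) \<le> 4 * E * L * L"
    by (rule gen[where lo="\<lambda>x1. 0" and hi="\<lambda>x1. x1"]) (use hs t T in \<open>auto simp: L_def\<close>)
  have "norm (Zphase \<eta> T t g h) \<le> 4 * E * L * L + 4 * E * L * L + 4 * E * L * L"
    unfolding Zphase_def
    using t1 t2 t3 norm_triangle_ineq4 norm_minus_cancel
    by (smt (verit) norm_triangle_ineq4 norm_minus_cancel)
  then show ?thesis by (simp add: L_def)
qed

lemma Yw_conv:
  assumes u: "\<And>k. k < length sg \<Longrightarrow> (\<lambda>n. u n k) \<longlonglongrightarrow> \<tau>' k"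
  shows "(\<lambda>n. Yw H r0 sg (u n) T) \<longlonglongrightarrow> Yw H r0 sg \<tau>' T"
proof -
  have pl: "(\<lambda>n. piecelen sg (u n) T j) \<longlonglongrightarrow> piecelen sg \<tau>' T j" for j
    by (cases "j < length sg") (auto simp: piecelen_def intro!: tendsto_intros u)
  have "(\<lambda>n. segweight H r0 sg (u n) T) \<longlonglongrightarrow> segweight H r0 sg \<tau>' T"
    unfolding segweight_def
    by (intro tendsto_mult tendsto_const tendsto_prod tendsto_exp tendsto_of_real pl)
  then show ?thesis by (simp add: Yw_def)
qed

lemma PiM_id_meas: "(\<lambda>x. x) \<in> measurable (Pi\<^sub>M {..<Dt} (\<lambda>_. lborel)) (borel :: (nat \<Rightarrow> real) measure)"
proof (rule measurable_coordinatewise_then_product)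
  fix i :: nat
  show "(\<lambda>x. x i) \<in> borel_measurable (Pi\<^sub>M {..<Dt} (\<lambda>_. lborel))"
  proof (cases "i < Dt")
    case True
    then show ?thesis using measurable_component_singleton[of i "{..<Dt}" "\<lambda>_. lborel"] by simp
  next
    case False
    show ?thesis
      by (subst Sigma_Algebra.measurable_cong[where g="\<lambda>x. undefined"]) (use False in \<open>auto simp: space_PiM PiE_def extensional_def\<close>)
  qed
qed

lemma tsimplex_borel: "tsimplex Dt t \<in> sets (borel :: (nat \<Rightarrow> real) measure)"
proof -
  have "tsimplex Dt t = {x \<in> space borel. (\<forall>k\<in>{..<Dt}. 0 < x k) \<and> (Dt = 0 \<or> (\<Sum>k<Dt. x k) < t)}"
    by (auto simp: tsimplex_def)
  also have "\<dots> \<in> sets borel" by measurable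
  finally show ?thesis .
qed

lemma tsimplex_sets: "tsimplex Dt t \<inter> space (Pi\<^sub>M {..<Dt} (\<lambda>_. lborel)) \<in> sets (Pi\<^sub>M {..<Dt} (\<lambda>_. lborel))"
  using measurable_sets[OF PiM_id_meas tsimplex_borel] by (simp add: vimage_def Int_def)

lemma tsimplex_emeasure:
  assumes t: "t \<ge> 0"
  shows "emeasure (Pi\<^sub>M {..<Dt} (\<lambda>_. lborel)) (tsimplex Dt t \<inter> space (Pi\<^sub>M {..<Dt} (\<lambda>_. lborel))) \<le> ennreal (t ^ Dt / fact Dt)"
proof -
  have "tsimplex Dt t \<inter> space (Pi\<^sub>M {..<Dt} (\<lambda>_. lborel)) \<subseteq> {x. (\<forall>i\<in>{..<Dt}. 0 \<le> x i) \<and> sum x {..<Dt} \<le> t} \<inter> space (Pi\<^sub>M {..<Dt} (\<lambda>_. lborel))"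
    using t by (auto simp: tsimplex_def less_imp_le)
  then have "emeasure (Pi\<^sub>M {..<Dt} (\<lambda>_. lborel)) (tsimplex Dt t \<inter> space (Pi\<^sub>M {..<Dt} (\<lambda>_. lborel)))
      \<le> emeasure (Pi\<^sub>M {..<Dt} (\<lambda>_. lborel)) ({x. (\<forall>i\<in>{..<Dt}. 0 \<le> x i) \<and> sum x {..<Dt} \<le> t} \<inter> space (Pi\<^sub>M {..<Dt} (\<lambda>_. lborel)))"
    by (intro emeasure_mono) (use emeasure_std_simplex_aux in auto)
  also have "\<dots> = ennreal (t ^ Dt / fact Dt)"
    using emeasure_std_simplex_aux[of "{..<Dt}" t] t by simp
  finally show ?thesis .
qed

lemma tsimplex_measure:
  assumes t: "t \<ge> 0"
  shows "measure (Pi\<^sub>M {..<Dt} (\<lambda>_. lborel)) (tsimplex Dt t \<inter> space (Pi\<^sub>M {..<Dt} (\<lambda>_. lborel))) \<le> t ^ Dt / fact Dt"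
  using tsimplex_emeasure[OF t, of Dt] t
  by (simp add: measure_def enn2real_leI)

lemma set_integral_Int_space:
  "(LINT x:A|M. f x) = (LINT x:(A \<inter> space M)|M. f x)"
  unfolding set_lebesgue_integral_def
  by (intro Bochner_Integration.integral_cong) (auto simp: indicator_def)



lemma Xw_meas: "(\<lambda>\<tau>t. Xw H \<rho> rt0 sgt \<tau>t t) \<in> borel_measurable (borel :: (nat \<Rightarrow> real) measure)"
  unfolding Xw_def segweight_def piecelen_def by measurable

lemma F_meas:
  fixes \<eta> :: "real \<Rightarrow> complex"
  assumes \<eta>: "\<eta> \<in> borel_measurable borel"
  shows "(\<lambda>\<tau>t. Xw H \<rho> rt0 sgt \<tau>t t * c * d * exp (Zphase \<eta> T t (pathseg rt0 sgt \<tau>t) (pathseg r0 sg v)))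
     \<in> borel_measurable (Pi\<^sub>M {..<Dt} (\<lambda>_. lborel))"
proof -
  have f: "(fst :: (nat \<Rightarrow> real) \<times> real \<Rightarrow> _) \<in> borel_measurable (borel \<Otimes>\<^sub>M lborel)" by measurable
  have s: "(snd :: (nat \<Rightarrow> real) \<times> real \<Rightarrow> _) \<in> borel_measurable (borel \<Otimes>\<^sub>M lborel)" by measurable
  have k: "(\<lambda>_. v) \<in> borel_measurable (borel \<Otimes>\<^sub>M (lborel :: real measure))" by measurable
  have Z: "(\<lambda>w. Zphase \<eta> T t (pathseg rt0 sgt w) (pathseg r0 sg v)) \<in> borel_measurable (borel :: (nat \<Rightarrow> real) measure)"
    by (rule Zphase_meas[OF \<eta>]) (use pp_pathseg_meas[OF f s] pp_pathseg_meas[OF k s] in auto)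
  have "(\<lambda>\<tau>t. Xw H \<rho> rt0 sgt \<tau>t t * c * d * exp (Zphase \<eta> T t (pathseg rt0 sgt \<tau>t) (pathseg r0 sg v)))
     \<in> borel_measurable (borel :: (nat \<Rightarrow> real) measure)"
    using Xw_meas Z by measurable
  from measurable_compose[OF PiM_id_meas this] show ?thesis by simp
qed

lemma F_bound:
  fixes \<eta> :: "real \<Rightarrow> complex"
  assumes herm: "hermitian2 H"
    and E: "\<And>s. s \<in> {0..T} \<Longrightarrow> norm (\<eta> s) \<le> E" and E0: "E \<ge> 0" and T: "T > 0" and t: "t \<ge> 0"
    and r0: "r0 \<in> spins \<times> spins" and rt0: "rt0 \<in> spins \<times> spins"
  shows "norm (Xw H \<rho> rt0 sgt \<tau>t t * c * Yw H r0 sg v T * exp (Zphase \<eta> T t (pathseg rt0 sgt \<tau>t) (pathseg r0 sg v)))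
     \<le> Hm \<rho> * Hm H ^ length sgt * norm c * Hm H ^ length sg * exp (3 * (4 * E * (t + T) * (t + T)))"
proof -
  have z: "norm (exp (Zphase \<eta> T t (pathseg rt0 sgt \<tau>t) (pathseg r0 sg v))) \<le> exp (3 * (4 * E * (t + T) * (t + T)))"
    using norm_exp[of "Zphase \<eta> T t (pathseg rt0 sgt \<tau>t) (pathseg r0 sg v)"]
          Zphase_bound[OF E E0 T t pathseg_spins[OF rt0] pathseg_spins[OF r0]]
    by (meson exp_le_cancel_iff order_trans)
  have x: "norm (Xw H \<rho> rt0 sgt \<tau>t t) \<le> Hm \<rho> * Hm H ^ length sgt" by (rule Xw_bound[OF herm rt0])
  have y: "norm (Yw H r0 sg v T) \<le> Hm H ^ length sg" unfolding Yw_def by (rule segweight_bound[OF herm r0])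
  show ?thesis unfolding norm_mult
    by (intro mult_mono x y z order_refl mult_nonneg_nonneg Hm_nonneg zero_le_power norm_ge_zero)
qed

lemma Fint_conv:
  fixes \<eta> :: "real \<Rightarrow> complex"
  assumes herm: "hermitian2 H" and \<eta>: "\<eta> \<in> borel_measurable borel"
    and E: "\<And>s. s \<in> {0..T} \<Longrightarrow> norm (\<eta> s) \<le> E" and E0: "E \<ge> 0" and T: "T > 0" and t: "t \<ge> 0"
    and r0: "r0 \<in> spins \<times> spins" and rt0: "rt0 \<in> spins \<times> spins"
    and u: "\<And>k. k < length sg \<Longrightarrow> (\<lambda>n. u n k) \<longlonglongrightarrow> \<tau>' k"
  shows "(\<lambda>n. LINT \<tau>t:tsimplex Dt t|Pi\<^sub>M {..<Dt} (\<lambda>_. lborel). Xw H \<rho> rt0 sgt \<tau>t t * c * Yw H r0 sg (u n) T * exp (Zphase \<eta> T t (pathseg rt0 sgt \<tau>t) (pathseg r0 sg (u n))))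
     \<longlonglongrightarrow> (LINT \<tau>t:tsimplex Dt t|Pi\<^sub>M {..<Dt} (\<lambda>_. lborel). Xw H \<rho> rt0 sgt \<tau>t t * c * Yw H r0 sg \<tau>' T * exp (Zphase \<eta> T t (pathseg rt0 sgt \<tau>t) (pathseg r0 sg \<tau>')))"
proof -
  let ?M = "Pi\<^sub>M {..<Dt} (\<lambda>_. lborel)"
  have eq: "\<And>f. (LINT x:tsimplex Dt t|?M. f x) = (LINT x:(tsimplex Dt t \<inter> space ?M)|?M. f x)"
    by (rule set_integral_Int_space)
  show ?thesis unfolding eq
  proof (rule dct_set[where B="Hm \<rho> * Hm H ^ length sgt * norm c * Hm H ^ length sg * exp (3 * (4 * E * (t + T) * (t + T)))"])
    show "tsimplex Dt t \<inter> space ?M \<in> sets ?M" by (rule tsimplex_sets)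
    show "emeasure ?M (tsimplex Dt t \<inter> space ?M) < \<infinity>"
      using tsimplex_emeasure[OF t, of Dt] by (simp add: order_le_less_trans)
    show "(\<lambda>\<tau>t. Xw H \<rho> rt0 sgt \<tau>t t * c * Yw H r0 sg (u n) T * exp (Zphase \<eta> T t (pathseg rt0 sgt \<tau>t) (pathseg r0 sg (u n)))) \<in> borel_measurable ?M" for n
      by (rule F_meas[OF \<eta>])
    show "(\<lambda>\<tau>t. Xw H \<rho> rt0 sgt \<tau>t t * c * Yw H r0 sg \<tau>' T * exp (Zphase \<eta> T t (pathseg rt0 sgt \<tau>t) (pathseg r0 sg \<tau>'))) \<in> borel_measurable ?M"
      by (rule F_meas[OF \<eta>])
    show "norm (Xw H \<rho> rt0 sgt \<tau>t t * c * Yw H r0 sg (u n) T * exp (Zphase \<eta> T t (pathseg rt0 sgt \<tau>t) (pathseg r0 sg (u n))))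
        \<le> Hm \<rho> * Hm H ^ length sgt * norm c * Hm H ^ length sg * exp (3 * (4 * E * (t + T) * (t + T)))" for n \<tau>t
      by (rule F_bound[OF herm E E0 T t r0 rt0])
    show "AE \<tau>t in ?M. \<tau>t \<in> tsimplex Dt t \<inter> space ?M \<longrightarrow>
        (\<lambda>n. Xw H \<rho> rt0 sgt \<tau>t t * c * Yw H r0 sg (u n) T * exp (Zphase \<eta> T t (pathseg rt0 sgt \<tau>t) (pathseg r0 sg (u n))))
        \<longlonglongrightarrow> Xw H \<rho> rt0 sgt \<tau>t t * c * Yw H r0 sg \<tau>' T * exp (Zphase \<eta> T t (pathseg rt0 sgt \<tau>t) (pathseg r0 sg \<tau>'))"
    proof (intro AE_I2 impI)
      fix \<tau>t :: "nat \<Rightarrow> real"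
      have k: "(\<lambda>_. \<tau>t) \<in> borel_measurable (lborel :: real measure)" by simp
      have i: "(\<lambda>x. x) \<in> borel_measurable (lborel :: real measure)" by simp
      have Z: "(\<lambda>n. Zphase \<eta> T t (pathseg rt0 sgt \<tau>t) (pathseg r0 sg (u n))) \<longlonglongrightarrow> Zphase \<eta> T t (pathseg rt0 sgt \<tau>t) (pathseg r0 sg \<tau>')"
        by (rule Zphase_conv[OF \<eta> E T t pathseg_spins[OF rt0] r0 _ _ u]) (use pp_pathseg_meas[OF k i] in auto)
      show "(\<lambda>n. Xw H \<rho> rt0 sgt \<tau>t t * c * Yw H r0 sg (u n) T * exp (Zphase \<eta> T t (pathseg rt0 sgt \<tau>t) (pathseg r0 sg (u n))))
        \<longlonglongrightarrow> Xw H \<rho> rt0 sgt \<tau>t t * c * Yw H r0 sg \<tau>' T * exp (Zphase \<eta> T t (pathseg rt0 sgt \<tau>t) (pathseg r0 sg \<tau>'))"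
        by (intro tendsto_mult tendsto_const Yw_conv u tendsto_exp Z)
    qed
  qed
qed

lemma Fint_bound:
  fixes \<eta> :: "real \<Rightarrow> complex"
  assumes herm: "hermitian2 H"
    and E: "\<And>s. s \<in> {0..T} \<Longrightarrow> norm (\<eta> s) \<le> E" and E0: "E \<ge> 0" and T: "T > 0" and t: "t \<ge> 0"
    and r0: "r0 \<in> spins \<times> spins" and rt0: "rt0 \<in> spins \<times> spins" and c: "norm c \<le> 1"
    and len: "length sgt = Dt"
  shows "norm (LINT \<tau>t:tsimplex Dt t|Pi\<^sub>M {..<Dt} (\<lambda>_. lborel). Xw H \<rho> rt0 sgt \<tau>t t * c * Yw H r0 sg v T * exp (Zphase \<eta> T t (pathseg rt0 sgt \<tau>t) (pathseg r0 sg v)))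
     \<le> (Hm \<rho> * Hm H ^ length sg * exp (3 * (4 * E * (t + T) * (t + T)))) * (Hm H ^ Dt * (t ^ Dt / fact Dt))"
proof -
  let ?M = "Pi\<^sub>M {..<Dt} (\<lambda>_. lborel)"
  let ?B = "Hm \<rho> * Hm H ^ length sgt * 1 * Hm H ^ length sg * exp (3 * (4 * E * (t + T) * (t + T)))"
  have B0: "?B \<ge> 0" by (intro mult_nonneg_nonneg Hm_nonneg zero_le_power) auto
  have "norm (LINT \<tau>t:tsimplex Dt t|?M. Xw H \<rho> rt0 sgt \<tau>t t * c * Yw H r0 sg v T * exp (Zphase \<eta> T t (pathseg rt0 sgt \<tau>t) (pathseg r0 sg v)))
     = norm (LINT \<tau>t:(tsimplex Dt t \<inter> space ?M)|?M. Xw H \<rho> rt0 sgt \<tau>t t * c * Yw H r0 sg v T * exp (Zphase \<eta> T t (pathseg rt0 sgt \<tau>t) (pathseg r0 sg v)))"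
    by (simp only: set_integral_Int_space[where A="tsimplex Dt t"])
  also have "\<dots> \<le> ?B * measure ?M (tsimplex Dt t \<inter> space ?M)"
  proof (rule set_integral_norm_le[OF tsimplex_sets _ B0])
    show "emeasure ?M (tsimplex Dt t \<inter> space ?M) < \<infinity>"
      using tsimplex_emeasure[OF t, of Dt] by (simp add: order_le_less_trans)
    fix \<tau>t
    have "norm (Xw H \<rho> rt0 sgt \<tau>t t * c * Yw H r0 sg v T * exp (Zphase \<eta> T t (pathseg rt0 sgt \<tau>t) (pathseg r0 sg v)))
        \<le> Hm \<rho> * Hm H ^ length sgt * norm c * Hm H ^ length sg * exp (3 * (4 * E * (t + T) * (t + T)))"
      by (rule F_bound[OF herm E E0 T t r0 rt0])
    also have "\<dots> \<le> ?B"
      by (intro mult_right_mono mult_left_mono c mult_nonneg_nonneg Hm_nonneg zero_le_power) auto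
    finally show "norm (Xw H \<rho> rt0 sgt \<tau>t t * c * Yw H r0 sg v T * exp (Zphase \<eta> T t (pathseg rt0 sgt \<tau>t) (pathseg r0 sg v))) \<le> ?B" .
  qed
  also have "\<dots> \<le> ?B * (t ^ Dt / fact Dt)"
    by (intro mult_left_mono tsimplex_measure t B0)
  finally show ?thesis using len by (simp add: algebra_simps)
qed



lemma card_spins2: "card (spins \<times> spins) = 4"
  by (simp add: spins_def card_cartesian_product)

lemma card_bool_lists: "card {xs :: bool list. length xs = n} = 2 ^ n"
  using card_lists_length_eq[of "UNIV :: bool set" n] by simp

theorem theorem3p6:
  fixes H \<rho> :: "int \<Rightarrow> int \<Rightarrow> complex"
    and \<beta> T t :: real
    and c m \<omega> :: "'j \<Rightarrow> real"
    and r0 :: "int \<times> int" and sg :: "bool list" and \<tau>' :: "nat \<Rightarrow> real"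
  assumes "hermitian2 H"
    and "T > 0" and "\<beta> > 0"
    and "\<forall>j. \<omega> j > 0"
    and "\<forall>\<tau>. eta_term \<beta> c m \<omega> \<tau> summable_on UNIV"
    and "continuous_on UNIV (eta_tilde \<beta> c m \<omega>)"
    and "t \<ge> 0"
    and "r0 \<in> spins \<times> spins"
    and "length sg \<ge> 1"
    and "\<tau>' \<in> closure (tsimplexR (length sg) T) - tsimplexR (length sg) T"
  shows "\<exists>l. ((\<lambda>\<tau>. Aamp H \<rho> (eta_tilde \<beta> c m \<omega>) T r0 sg t \<tau>) \<longlongrightarrow> l)
               (at \<tau>' within tsimplexR (length sg) T)"
proof -
  note herm = assms(1) and T = assms(2) and t = assms(7) and r0 = assms(8)
  define \<eta> where "\<eta> = eta_tilde \<beta> c m \<omega>"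
  define S where "S = tsimplexR (length sg) T"
  have \<eta>c: "continuous_on UNIV \<eta>" using assms(6) by (simp add: \<eta>_def)
  have \<eta>m: "\<eta> \<in> borel_measurable borel" by (rule borel_measurable_continuous_onI[OF \<eta>c])
  have "compact (\<eta> ` {0..T})"
    by (rule compact_continuous_image) (use \<eta>c continuous_on_subset in auto)
  then obtain E where E: "\<And>s. s \<in> {0..T} \<Longrightarrow> norm (\<eta> s) \<le> E"
    using compact_imp_bounded bounded_iff by (metis image_eqI)
  have E0: "E \<ge> 0" using E[of 0] T by (auto intro: order_trans[OF norm_ge_zero])
  define a where "a = (\<lambda>Dt \<tau>. \<Sum>rt0\<in>spins \<times> spins. \<Sum>sgt\<in>{xs. length xs = Dt}.
       LINT \<tau>t:tsimplex Dt t|Pi\<^sub>M {..<Dt} (\<lambda>_. lborel).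
         Xw H \<rho> rt0 sgt \<tau>t t * (if pstate rt0 sgt Dt = r0 then 1 else 0) * Yw H r0 sg \<tau> T
         * exp (Zphase \<eta> T t (pathseg rt0 sgt \<tau>t) (pathseg r0 sg \<tau>)))"
  have Aeq: "Aamp H \<rho> \<eta> T r0 sg t \<tau> = (\<Sum>Dt. a Dt \<tau>)" for \<tau>
    by (simp add: Aamp_def a_def)
  have cont: "continuous (at \<tau>' within S) (a Dt)" for Dt
  proof (rule continuous_within_sequentiallyI)
    fix u :: "nat \<Rightarrow> nat \<Rightarrow> real"
    assume u: "u \<longlonglongrightarrow> \<tau>'"
    have uk: "(\<lambda>n. u n k) \<longlonglongrightarrow> \<tau>' k" for k
    proof -
      have "isCont (\<lambda>x::nat \<Rightarrow> real. x k) \<tau>'"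
        using continuous_on_product_coordinates[of k] continuous_on_eq_continuous_at[OF open_UNIV] by blast
      from isCont_tendsto_compose[OF this u] show ?thesis .
    qed
    show "(\<lambda>n. a Dt (u n)) \<longlonglongrightarrow> a Dt \<tau>'"
      unfolding a_def
    proof (intro tendsto_sum)
      fix rt0 and sgt :: "bool list" assume rt0: "rt0 \<in> spins \<times> spins"
      show "(\<lambda>n. LINT \<tau>t:tsimplex Dt t|Pi\<^sub>M {..<Dt} (\<lambda>_. lborel).
         Xw H \<rho> rt0 sgt \<tau>t t * (if pstate rt0 sgt Dt = r0 then 1 else 0) * Yw H r0 sg (u n) T
         * exp (Zphase \<eta> T t (pathseg rt0 sgt \<tau>t) (pathseg r0 sg (u n)))) \<longlonglongrightarrow>
         (LINT \<tau>t:tsimplex Dt t|Pi\<^sub>M {..<Dt} (\<lambda>_. lborel).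
         Xw H \<rho> rt0 sgt \<tau>t t * (if pstate rt0 sgt Dt = r0 then 1 else 0) * Yw H r0 sg \<tau>' T
         * exp (Zphase \<eta> T t (pathseg rt0 sgt \<tau>t) (pathseg r0 sg \<tau>')))"
        by (rule Fint_conv[OF herm \<eta>m E E0 T t r0 rt0 uk])
    qed
  qed
  define C where "C = Hm \<rho> * Hm H ^ length sg * exp (3 * (4 * E * (t + T) * (t + T)))"
  define Mk where "Mk = (\<lambda>Dt. 4 * (2 ^ Dt * (C * (Hm H ^ Dt * (t ^ Dt / fact Dt)))))"
  have bound: "norm (a Dt \<tau>) \<le> Mk Dt" for Dt \<tau>
  proof -
    have inner: "norm (LINT \<tau>t:tsimplex Dt t|Pi\<^sub>M {..<Dt} (\<lambda>_. lborel).
         Xw H \<rho> rt0 sgt \<tau>t t * (if pstate rt0 sgt Dt = r0 then 1 else 0) * Yw H r0 sg \<tau> T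
         * exp (Zphase \<eta> T t (pathseg rt0 sgt \<tau>t) (pathseg r0 sg \<tau>))) \<le> C * (Hm H ^ Dt * (t ^ Dt / fact Dt))"
      if rt0: "rt0 \<in> spins \<times> spins" and sgt: "sgt \<in> {xs. length xs = Dt}" for rt0 and sgt :: "bool list"
      unfolding C_def by (rule Fint_bound[OF herm E E0 T t r0 rt0]) (use sgt in auto)
    have "norm (a Dt \<tau>) \<le> (\<Sum>rt0\<in>spins \<times> spins. norm (\<Sum>sgt\<in>{xs. length xs = Dt}. LINT \<tau>t:tsimplex Dt t|Pi\<^sub>M {..<Dt} (\<lambda>_. lborel).
         Xw H \<rho> rt0 sgt \<tau>t t * (if pstate rt0 sgt Dt = r0 then 1 else 0) * Yw H r0 sg \<tau> T
         * exp (Zphase \<eta> T t (pathseg rt0 sgt \<tau>t) (pathseg r0 sg \<tau>))))"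
      unfolding a_def by (rule norm_sum)
    also have "\<dots> \<le> (\<Sum>rt0\<in>spins \<times> spins. \<Sum>sgt\<in>{xs. length xs = Dt}. norm (LINT \<tau>t:tsimplex Dt t|Pi\<^sub>M {..<Dt} (\<lambda>_. lborel).
         Xw H \<rho> rt0 sgt \<tau>t t * (if pstate rt0 sgt Dt = r0 then 1 else 0) * Yw H r0 sg \<tau> T
         * exp (Zphase \<eta> T t (pathseg rt0 sgt \<tau>t) (pathseg r0 sg \<tau>))))"
      by (intro sum_mono norm_sum)
    also have "\<dots> \<le> (\<Sum>rt0\<in>spins \<times> spins. \<Sum>sgt\<in>{xs::bool list. length xs = Dt}. C * (Hm H ^ Dt * (t ^ Dt / fact Dt)))"
      by (intro sum_mono inner)
    also have "\<dots> = Mk Dt"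
      by (simp add: Mk_def card_spins2 card_bool_lists)
    finally show ?thesis .
  qed
  have summ: "summable Mk"
  proof -
    have eq: "(\<lambda>n. (4 * C) * ((2 * Hm H * t) ^ n /\<^sub>R fact n)) = Mk"
      unfolding Mk_def fun_eq_iff by (simp add: power_mult_distrib divide_inverse mult_ac)
    show ?thesis unfolding eq[symmetric] by (rule summable_mult[OF summable_exp_generic])
  qed
  have nb: "at \<tau>' within S \<noteq> bot"
  proof -
    have "S - {\<tau>'} = S" using assms(10) unfolding S_def by blast
    moreover have "\<tau>' \<in> closure S" using assms(10) unfolding S_def by blast
    ultimately have "\<tau>' \<in> closure (S - {\<tau>'})" by simp
    then show ?thesis using not_trivial_limit_within[of \<tau>' S] by blast
  qed
  have lim: "((\<lambda>\<tau>. \<Sum>Dt. a Dt \<tau>) \<longlongrightarrow> (\<Sum>Dt. a Dt \<tau>')) (at \<tau>' within S)"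
  proof -
    have "\<And>k. (a k \<longlongrightarrow> a k \<tau>') (at \<tau>' within S)"
      using cont by (simp add: continuous_within)
    moreover have "\<forall>\<^sub>F (k, n) in sequentially \<times>\<^sub>F (at \<tau>' within S). norm (a k n) \<le> Mk k"
      by (intro always_eventually) (simp add: case_prod_beta bound)
    ultimately show ?thesis
      using tannerys_theorem[of a "\<lambda>k. a k \<tau>'" "at \<tau>' within S" Mk, OF _ _ summ nb] by blast
  qed
  show ?thesis
    using lim unfolding Aeq[symmetric] \<eta>_def S_def by blast
qed

end
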